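(* Let $M$ be a compact metric space, $C\subset M$ a subset, and $f\colon C\to M$ a surjective $1$-Lipschitz map. Then $M$ is the closure of $C$. *)

theory Defs
  imports "HOL-Analysis.Analysis"
begin

end

theory Submission
  imports Defs
begin

definition sepd :: "real \<Rightarrow> 'a::metric_space set \<Rightarrow> bool" where
  "sepd e S \<longleftrightarrow> (\<forall>x\<in>S. \<forall>y\<in>S. x \<noteq> y \<longrightarrow> e < dist x y)"

lemma sep_bound:
  fixes M :: "'a::metric_space set"
  assumes "compact M" "e > 0"
  shows "\<exists>n. \<forall>S. S \<subseteq> M \<longrightarrow> sepd e S \<longrightarrow> finite S \<and> card S \<le> n"
proof -
  obtain K where K: "finite K" "K \<subseteq> M" "M \<subseteq> (\<Union>x\<in>K. ball x (e/2))"
    using seq_compact_imp_totally_bounded[OF compact_imp_seq_compact[OF assms(1)]] assms(2)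
    by (meson half_gt_zero)
  show ?thesis
  proof (intro exI allI impI)
    fix S assume S: "S \<subseteq> M" "sepd e S"
    define g where "g s = (SOME t. t \<in> K \<and> s \<in> ball t (e/2))" for s
    have g: "g s \<in> K \<and> s \<in> ball (g s) (e/2)" if "s \<in> S" for s
      unfolding g_def by (rule someI_ex) (use K S that in blast)
    have inj: "inj_on g S"
    proof (rule inj_onI)
      fix x y assume xy: "x \<in> S" "y \<in> S" "g x = g y"
      show "x = y"
      proof (rule ccontr)
        assume "x \<noteq> y"
        then have "e < dist x y" using S(2) xy unfolding sepd_def by blast
        moreover have "dist x y < e"
        proof -
          have "dist x (g x) < e/2" using g[OF xy(1)] by (simp add: dist_commute)
          moreover have "dist (g x) y < e/2" using g[OF xy(2)] xy(3) by simp
          ultimately show ?thesis using dist_triangle[of x y "g x"] by linarith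
        qed
        ultimately show False by simp
      qed
    qed
    have sub: "g ` S \<subseteq> K" using g by blast
    show "finite S \<and> card S \<le> card K"
    proof
      show "finite S" using inj sub K(1) finite_subset finite_imageD by metis
      then show "card S \<le> card K" using card_inj_on_le[OF inj sub K(1)] by simp
    qed
  qed
qed

theorem mainTheorem12:
  fixes M C :: "'a::metric_space set" and f :: "'a \<Rightarrow> 'a"
  assumes "compact M"
    and "C \<subseteq> M"
    and "f ` C = M"
    and "\<And>x y. x \<in> C \<Longrightarrow> y \<in> C \<Longrightarrow> dist (f x) (f y) \<le> dist x y"
  shows "closure C = M"
proof (rule ccontr)
  assume ne: "closure C \<noteq> M"
  have "closure C \<subseteq> M"
    using assms(1,2) by (simp add: closure_minimal compact_imp_closed)
  then obtain p where p: "p \<in> M" "p \<notin> closure C" using ne by blast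
  then obtain d where d: "d > 0" "\<And>y. y \<in> C \<Longrightarrow> d \<le> dist y p"
  proof -
    from p(2) obtain d where "d > 0" "\<not> (\<exists>y\<in>C. dist y p < d)"
      unfolding closure_approachable by blast
    then show ?thesis using that by (meson not_less)
  qed
  define e where "e = d/2"
  have e: "e > 0" "e < d" using d by (auto simp: e_def)
  obtain n where n: "\<And>S. S \<subseteq> M \<Longrightarrow> sepd e S \<Longrightarrow> finite S \<and> card S \<le> n"
    using sep_bound[OF assms(1) e(1)] by blast
  define A where "A = {card S | S. S \<subseteq> M \<and> sepd e S}"
  have "finite A" unfolding A_def
  proof (rule finite_subset[of _ "{..n}"])
    show "{card S |S. S \<subseteq> M \<and> sepd e S} \<subseteq> {..n}" using n by blast
  qed simp
  moreover have "0 \<in> A" unfolding A_def sepd_def by force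
  ultimately have "Max A \<in> A" using Max_in by blast
  moreover obtain m where m: "m = Max A" by blast
  ultimately have "m \<in> A" by simp
  then have "\<exists>S. m = card S \<and> S \<subseteq> M \<and> sepd e S"
    unfolding A_def by blast
  then obtain S where S: "S \<subseteq> M" "sepd e S" "card S = Max A" using m by metis
  have finS: "finite S" using n S by blast
  define g where "g s = (SOME c. c \<in> C \<and> f c = s)" for s
  have g: "g s \<in> C \<and> f (g s) = s" if "s \<in> S" for s
    unfolding g_def by (rule someI_ex) (use assms(3) S that in blast)
  have inj: "inj_on g S"
  proof (rule inj_onI)
    fix x y assume "x \<in> S" "y \<in> S" "g x = g y"
    then show "x = y" using g[of x] g[of y] by metis
  qed
  have sepg: "sepd e (g ` S)"
    unfolding sepd_def
  proof (intro ballI impI)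
    fix x y assume "x \<in> g ` S" "y \<in> g ` S" "x \<noteq> y"
    then obtain a b where ab: "a \<in> S" "b \<in> S" "x = g a" "y = g b" "a \<noteq> b" by blast
    have "e < dist a b" using S(2) ab unfolding sepd_def by blast
    also have "\<dots> \<le> dist x y" using assms(4)[of x y] g ab by auto
    finally show "e < dist x y" .
  qed
  have pn: "p \<notin> g ` S"
  proof
    assume "p \<in> g ` S"
    then have "p \<in> C" using g by blast
    then show False using d by fastforce
  qed
  have sep2: "sepd e (insert p (g ` S))"
    unfolding sepd_def
  proof (intro ballI impI)
    have pc: "e < dist p c" if "c \<in> g ` S" for c
    proof -
      have "c \<in> C" using that g by blast
      then have "d \<le> dist c p" by (rule d(2))
      then show ?thesis using e(2) by (simp add: dist_commute)
    qed
    fix x y assume xy: "x \<in> insert p (g ` S)" "y \<in> insert p (g ` S)" "x \<noteq> y"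
    show "e < dist x y"
    proof (cases "x = p")
      case True then show ?thesis using pc xy by auto
    next
      case False
      note xS = this
      show ?thesis
      proof (cases "y = p")
        case True then show ?thesis using pc[of x] xy xS by (auto simp: dist_commute)
      next
        case False then show ?thesis using sepg xy xS unfolding sepd_def by auto
      qed
    qed
  qed
  have sub2: "insert p (g ` S) \<subseteq> M" using p(1) g assms(2) by blast
  have "card (insert p (g ` S)) \<in> A" unfolding A_def using sep2 sub2 by blast
  then have "card (insert p (g ` S)) \<le> Max A" using \<open>finite A\<close> by simp
  moreover have "card (insert p (g ` S)) = card S + 1"
    using pn finS inj by (simp add: card_image)
  ultimately show False using S(3) by simp
qed

end
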